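(* For every $k\ge1$, $\langle B_k\rangle=\langle C_k\rangle$. (Moreover $|B_k|=|C_k|=2^k-k-1$ and the sets of $B_k$, viewed as characteristic vectors in $\mathbb{Z}_2^{2^k}$, are linearly independent, so $C_k$ is also a basis of this subspace.)
   Context: For subsets $x,y$ of $[n]=\{1,\dots,n\}$, $x\oplus y$ is the symmetric difference. For a family $X$ of subsets of $[n]$, its span $\langle X\rangle$ is the set of all symmetric differences $x_1\oplus\cdots\oplus x_t$ of finitely many members of $X$ (including the empty set for $t=0$). For a set $x$ of integers and integer $t\ge1$, $t\cdot x:=\{ti:i\in x\}$, applied elementwise to families. Define $B_1:=\emptyset$ and for $k\ge2$, $B_k:=B_{k-1}\cup\{\{i,2^{k-1}+i\}: 1\le i\le 2^{k-1}-1\}$. Define $O_1:=C_1:=\emptyset$ and for $k\ge2$: $O_k:=\{\{2i-1,2i+1\}:1\le i\le 2^{k-1}-1\}$ and $C_k:=O_k\cup 2\cdot C_{k-1}$. *)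

theory Defs
  imports Main
begin

definition sdiff :: "nat set \<Rightarrow> nat set \<Rightarrow> nat set" where
  "sdiff x y = (x - y) \<union> (y - x)"

definition sdiff_list :: "nat set list \<Rightarrow> nat set" where
  "sdiff_list xs = foldr sdiff xs {}"

definition span2 :: "nat set set \<Rightarrow> nat set set" where
  "span2 X = {sdiff_list xs | xs. set xs \<subseteq> X}"

text \<open>Linear independence over Z_2 of characteristic vectors: no nonempty
  collection of distinct members has empty symmetric difference.\<close>
definition lin_indep2 :: "nat set set \<Rightarrow> bool" where
  "lin_indep2 X \<longleftrightarrow> (\<forall>xs. set xs \<subseteq> X \<and> distinct xs \<and> xs \<noteq> [] \<longrightarrow> sdiff_list xs \<noteq> {})"

definition smul :: "nat \<Rightarrow> nat set \<Rightarrow> nat set" where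
  "smul t x = (\<lambda>i. t * i) ` x"

definition smul_fam :: "nat \<Rightarrow> nat set set \<Rightarrow> nat set set" where
  "smul_fam t X = smul t ` X"

text \<open>B_k for k \<ge> 1 (the value at k = 0 is irrelevant and set to the empty family).\<close>
fun B :: "nat \<Rightarrow> nat set set" where
  "B 0 = {}"
| "B (Suc 0) = {}"
| "B (Suc (Suc k)) = B (Suc k) \<union> {{i, 2^(Suc k) + i} | i. 1 \<le> i \<and> i \<le> 2^(Suc k) - 1}"

definition O_fam :: "nat \<Rightarrow> nat set set" where
  "O_fam k = (if k \<le> 1 then {} else {{2*i - 1, 2*i + 1} | i. 1 \<le> i \<and> i \<le> 2^(k-1) - 1})"

fun C :: "nat \<Rightarrow> nat set set" where
  "C 0 = {}"
| "C (Suc 0) = {}"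
| "C (Suc (Suc k)) = O_fam (Suc (Suc k)) \<union> smul_fam 2 (C (Suc k))"

end

theory Submission
  imports Defs
begin

lemma sdiff_assoc: "sdiff (sdiff a b) c = sdiff a (sdiff b c)" by (auto simp: sdiff_def)
lemma sdiff_empty_right[simp]: "sdiff a {} = a" by (auto simp: sdiff_def)
lemma sdiff_empty_left[simp]: "sdiff {} a = a" by (auto simp: sdiff_def)

lemma sdiff_list_Nil[simp]: "sdiff_list [] = {}" by (simp add: sdiff_list_def)
lemma sdiff_list_Cons[simp]: "sdiff_list (x#xs) = sdiff x (sdiff_list xs)"
  by (simp add: sdiff_list_def)
lemma sdiff_list_append: "sdiff_list (xs@ys) = sdiff (sdiff_list xs) (sdiff_list ys)"
  by (induction xs) (auto simp: sdiff_assoc)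

lemma span2_iff: "y \<in> span2 X \<longleftrightarrow> (\<exists>xs. y = sdiff_list xs \<and> set xs \<subseteq> X)"
  by (simp add: span2_def)
lemma span2_empty: "{} \<in> span2 X"
  unfolding span2_iff by (rule exI[of _ "[]"]) simp
lemma span2_base: "x \<in> X \<Longrightarrow> x \<in> span2 X"
  unfolding span2_iff by (rule exI[of _ "[x]"]) simp
lemma span2_sdiff: "a \<in> span2 X \<Longrightarrow> b \<in> span2 X \<Longrightarrow> sdiff a b \<in> span2 X"
  unfolding span2_iff by (metis sdiff_list_append set_append Un_subset_iff)
lemma span2_subset: assumes "X \<subseteq> span2 Y" shows "span2 X \<subseteq> span2 Y"
proof
  fix y assume "y \<in> span2 X"
  then obtain xs where y: "y = sdiff_list xs" "set xs \<subseteq> X" by (auto simp: span2_iff)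
  have "sdiff_list xs \<in> span2 Y" using y(2)
  proof (induction xs)
    case Nil show ?case by (simp add: span2_empty)
  next
    case (Cons x xs) then show ?case using assms by (auto intro: span2_sdiff)
  qed
  then show "y \<in> span2 Y" using y by simp
qed
lemma span2_mono: "X \<subseteq> Y \<Longrightarrow> span2 X \<subseteq> span2 Y"
  by (meson span2_base span2_subset subset_iff)

lemma inj_mul2: "inj (\<lambda>i::nat. 2 * i)" by (auto simp: inj_def)

lemma smul_sdiff: "smul 2 (sdiff a b) = sdiff (smul 2 a) (smul 2 b)"
  using inj_mul2 by (simp add: smul_def sdiff_def image_Un image_set_diff)

lemma smul_span: assumes "x \<in> span2 X" shows "smul 2 x \<in> span2 (smul_fam 2 X)"
proof -
  obtain xs where x: "x = sdiff_list xs" "set xs \<subseteq> X" using assms by (auto simp: span2_iff)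
  have "smul 2 (sdiff_list xs) = sdiff_list (map (smul 2) xs)"
    by (induction xs) (simp_all add: smul_sdiff smul_def[of _ "{}"])
  then show ?thesis unfolding span2_iff smul_fam_def using x by (metis image_mono set_map)
qed

definition Bs :: "nat \<Rightarrow> nat set set" where
  "Bs k = {{i, 2^j+i} | i j. 1 \<le> j \<and> j < k \<and> 1 \<le> i \<and> i < 2^j}"

lemma Bs_memI: "1 \<le> j \<Longrightarrow> j < k \<Longrightarrow> 1 \<le> i \<Longrightarrow> i < 2^j \<Longrightarrow> {i, 2^j+i} \<in> Bs k"
  by (auto simp: Bs_def)

lemma Bs_01: "Bs 0 = {}" "Bs (Suc 0) = {}" by (auto simp: Bs_def)

lemma Bs_Suc: assumes "k \<ge> 1"
  shows "Bs (Suc k) = Bs k \<union> (\<lambda>i. {i, 2^k+i}) ` {1..<2^k}"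
  using assms unfolding Bs_def apply (auto simp: less_Suc_eq) by blast

lemma B_Bs: "B k = Bs k"
proof (induction k rule: B.induct)
  case 1 show ?case by (simp add: Bs_01)
next
  case 2 show ?case by (simp add: Bs_01)
next
  case (3 k)
  have "{{i, 2^(Suc k) + i} | i::nat. 1 \<le> i \<and> i \<le> 2^(Suc k) - 1} = (\<lambda>i. {i, 2^(Suc k)+i}) ` {1..<2^(Suc k)}"
    by (auto simp: less_Suc_eq_le[symmetric])
  then show ?case using 3 Bs_Suc[of "Suc k"] by simp
qed

lemma O_memI: "1 \<le> i \<Longrightarrow> i \<le> 2^(Suc k) - 1 \<Longrightarrow> {2*i-1, 2*i+1} \<in> O_fam (Suc (Suc k))"
  by (auto simp: O_fam_def)


lemma Bs_mono: "Bs k \<subseteq> Bs (Suc k)" unfolding Bs_def by (blast intro: less_SucI)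

lemma lemP: "odd m \<Longrightarrow> 3 \<le> m \<Longrightarrow> m < 2^k \<Longrightarrow> {1,m} \<in> span2 (Bs k)"
proof (induction k arbitrary: m)
  case 0 then show ?case by simp
next
  case (Suc k)
  have mono: "span2 (Bs k) \<subseteq> span2 (Bs (Suc k))" by (rule span2_mono[OF Bs_mono])
  show ?case
  proof (cases "m < 2^k")
    case True then show ?thesis using Suc mono by blast
  next
    case False
    define r where "r = m - 2^k"
    have k1: "k \<ge> 1"
    proof (rule ccontr)
      assume "\<not> k \<ge> 1" then have "k = 0" by simp
      then show False using Suc.prems by simp
    qed
    have ev: "even ((2::nat)^k)" using k1 by simp
    have r: "r < 2^k" "m = 2^k + r" using Suc.prems False unfolding r_def by auto
    have ro: "odd r" using r(2) ev Suc.prems(1) by auto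
    then have r1: "1 \<le> r" by (cases r) auto
    have rm: "{r, m} \<in> Bs (Suc k)" using Bs_memI[of k "Suc k" r] k1 r r1 by simp
    show ?thesis
    proof (cases "r = 1")
      case True then show ?thesis using rm span2_base by auto
    next
      case False
      then have "3 \<le> r" using ro r1 by presburger
      then have "{1,r} \<in> span2 (Bs (Suc k))" using Suc.IH mono r ro by blast
      moreover have "{1,m} = sdiff {1,r} {r,m}" using False r Suc.prems by (auto simp: sdiff_def)
      ultimately show ?thesis using rm span2_base span2_sdiff by metis
    qed
  qed
qed

lemma lemQ: "2*t+3 < 2^(Suc(Suc k)) \<Longrightarrow> {1, 2*t+3} \<in> span2 (O_fam (Suc (Suc k)))"
proof (induction t)
  case 0
  have "(1::nat) \<le> 2^(Suc k) - 1" using less_exp[of "Suc k"] by linarith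
  then have "{2*1-1, 2*1+1} \<in> O_fam (Suc (Suc k))" by (rule O_memI[OF order_refl])
  then show ?case by (simp add: span2_base)
next
  case (Suc t)
  have "t + 2 \<le> 2^(Suc k) - 1" using Suc.prems by simp
  then have "{2*(t+2)-1, 2*(t+2)+1} \<in> O_fam (Suc (Suc k))" by (intro O_memI) auto
  moreover have "{2*(t+2)-1, 2*(t+2)+1} = {2*t+3, 2*Suc t + 3}"
    by (simp add: numeral_eq_Suc)
  moreover have "{1, 2*Suc t+3} = sdiff {1, 2*t+3} {2*t+3, 2*Suc t + 3}" by (auto simp: sdiff_def)
  moreover have "2*t+3 < 2^(Suc(Suc k))" using Suc.prems by simp
  ultimately show ?case using Suc.IH span2_base span2_sdiff by metis
qed

lemma lemQ1: assumes "odd b" "3 \<le> b" "b < 2^(Suc(Suc k))"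
  shows "{1, b} \<in> span2 (O_fam (Suc (Suc k)))"
proof -
  define t where "t = (b - 3) div 2"
  have "b = 2*t+3" using assms unfolding t_def by presburger
  then show ?thesis using lemQ assms by blast
qed

lemma lemQ2: assumes "odd a" "odd b" "1 \<le> a" "a < b" "b < 2^(Suc(Suc k))"
  shows "{a, b} \<in> span2 (O_fam (Suc (Suc k)))"
proof (cases "a = 1")
  case True
  have "3 \<le> b" using assms True by presburger
  then show ?thesis using True lemQ1 assms by blast
next
  case False
  then have "3 \<le> a" "3 \<le> b" using assms by presburger+
  then have "{1,a} \<in> span2 (O_fam (Suc (Suc k)))" "{1,b} \<in> span2 (O_fam (Suc (Suc k)))"
    using lemQ1 assms by auto
  moreover have "{a,b} = sdiff {1,a} {1,b}" using False assms by (auto simp: sdiff_def)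
  ultimately show ?thesis by (simp add: span2_sdiff)
qed


lemma smul_pair: "smul 2 {a, b} = {2*a, 2*b}" by (simp add: smul_def)

lemma span_step:
  assumes IH: "span2 (Bs (Suc n)) = span2 (C (Suc n))"
  shows "span2 (Bs (Suc (Suc n))) = span2 (C (Suc (Suc n)))"
proof -
  let ?O = "O_fam (Suc (Suc n))"
  have CC: "C (Suc (Suc n)) = ?O \<union> smul_fam 2 (C (Suc n))" by simp
  have spO: "span2 ?O \<subseteq> span2 (C (Suc (Suc n)))" by (rule span2_mono) auto
  have spS: "span2 (smul_fam 2 (C (Suc n))) \<subseteq> span2 (C (Suc (Suc n)))" by (rule span2_mono) auto
  have a: "Bs (Suc (Suc n)) \<subseteq> span2 (C (Suc (Suc n)))"
  proof
    fix x assume "x \<in> Bs (Suc (Suc n))"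
    then obtain i j where x: "x = {i, 2^j+i}" "1 \<le> j" "j < Suc (Suc n)" "1 \<le> i" "i < 2^j"
      by (auto simp: Bs_def)
    show "x \<in> span2 (C (Suc (Suc n)))"
    proof (cases "even i")
      case True
      then obtain i' where i': "i = 2*i'" by blast
      have "j \<noteq> 1" using x True by auto
      then obtain j' where j': "j = Suc j'" "1 \<le> j'" using x by (cases j) auto
      have "{i', 2^j'+i'} \<in> Bs (Suc n)" using x i' j' by (intro Bs_memI) auto
      then have "{i', 2^j'+i'} \<in> span2 (C (Suc n))" using IH span2_base by blast
      then have "smul 2 {i', 2^j'+i'} \<in> span2 (C (Suc (Suc n)))" using smul_span spS by blast
      moreover have "smul 2 {i', 2^j'+i'} = x" using x i' j' by (simp add: smul_pair algebra_simps)
      ultimately show ?thesis by simp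
    next
      case False
      have "2^j + i < 2^(Suc j)" using x by simp
      also have "\<dots> \<le> 2^(Suc (Suc n))" using x by (intro power_increasing) auto
      finally have lt: "2^j + i < 2^(Suc (Suc n))" .
      have "odd (2^j + i)" using False x by simp
      then have "x \<in> span2 ?O" using lemQ2[of i "2^j+i" n] x False lt by simp
      then show ?thesis using spO by blast
    qed
  qed
  have b: "C (Suc (Suc n)) \<subseteq> span2 (Bs (Suc (Suc n)))"
  proof
    fix x assume "x \<in> C (Suc (Suc n))"
    then consider "x \<in> ?O" | "x \<in> smul_fam 2 (C (Suc n))" using CC by blast
    then show "x \<in> span2 (Bs (Suc (Suc n)))"
    proof cases
      case 1
      then obtain i where x: "x = {2*i-1, 2*i+1}" "1 \<le> i" "i \<le> 2^(Suc n) - 1"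
        by (auto simp: O_fam_def)
      have p: "(1::nat) \<le> 2^n" by simp
      have lt: "2*i+1 < 2^(Suc (Suc n))" using x(3) p by (simp only: power_Suc)
      have m: "{1, 2*i+1} \<in> span2 (Bs (Suc (Suc n)))" using lemP[of "2*i+1"] x lt by simp
      show ?thesis
      proof (cases "i = 1")
        case True then show ?thesis using m x by simp
      next
        case False
        have "{1, 2*i-1} \<in> span2 (Bs (Suc (Suc n)))" using lemP[of "2*i-1"] x lt False by simp
        moreover have "x = sdiff {1, 2*i-1} {1, 2*i+1}" using x False by (auto simp: sdiff_def)
        ultimately show ?thesis using m span2_sdiff by simp
      qed
    next
      case 2
      then obtain c where c: "x = smul 2 c" "c \<in> C (Suc n)" by (auto simp: smul_fam_def)
      then have "c \<in> span2 (Bs (Suc n))" using IH span2_base by blast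
      then have "x \<in> span2 (smul_fam 2 (Bs (Suc n)))" using smul_span c by blast
      moreover have "smul_fam 2 (Bs (Suc n)) \<subseteq> Bs (Suc (Suc n))"
      proof
        fix y assume "y \<in> smul_fam 2 (Bs (Suc n))"
        then obtain i j where y: "y = smul 2 {i, 2^j+i}" "1 \<le> j" "j < Suc n" "1 \<le> i" "i < 2^j"
          by (auto simp: smul_fam_def Bs_def)
        have "{2*i, 2^(Suc j) + 2*i} \<in> Bs (Suc (Suc n))" using y by (intro Bs_memI) auto
        then show "y \<in> Bs (Suc (Suc n))" using y by (simp add: smul_pair)
      qed
      ultimately show ?thesis using span2_mono by blast
    qed
  qed
  show ?thesis using span2_subset[OF a] span2_subset[OF b] by blast
qed

lemma span_eq: "span2 (B (Suc n)) = span2 (C (Suc n))"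
proof (induction n)
  case 0 then show ?case by simp
next
  case (Suc n) then show ?case using span_step by (simp only: B_Bs)
qed


lemma mem_sdiff_list: "n \<in> sdiff_list xs \<longleftrightarrow> odd (length (filter (\<lambda>x. n \<in> x) xs))"
  by (induction xs) (auto simp: sdiff_def)

lemma indep_crit:
  assumes fin: "\<forall>x\<in>X. finite x \<and> x \<noteq> {}" and inj: "inj_on Max X"
  shows "lin_indep2 X"
  unfolding lin_indep2_def
proof (intro allI impI)
  fix xs assume h: "set xs \<subseteq> X \<and> distinct xs \<and> xs \<noteq> []"
  define M where "M = Max (Max ` set xs)"
  have "M \<in> Max ` set xs" using h unfolding M_def by (intro Max_in) auto
  then obtain x0 where x0: "x0 \<in> set xs" "Max x0 = M" by auto
  have "set (filter (\<lambda>x. M \<in> x) xs) = {x0}"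
  proof
    show "set (filter (\<lambda>x. M \<in> x) xs) \<subseteq> {x0}"
    proof
      fix x assume "x \<in> set (filter (\<lambda>x. M \<in> x) xs)"
      then have x: "x \<in> set xs" "M \<in> x" by auto
      have "x \<in> X" using x h by blast
      then have "finite x" using fin by blast
      then have "M \<le> Max x" using x by (simp add: Max_ge)
      moreover have "Max x \<le> M" unfolding M_def using x by (intro Max_ge) auto
      ultimately have "Max x = Max x0" using x0 by simp
      moreover have "x \<in> X" "x0 \<in> X" using x x0 h by blast+
      ultimately have "x = x0" using inj by (simp add: inj_on_eq_iff)
      then show "x \<in> {x0}" by simp
    qed
  next
    have "x0 \<in> X" using x0 h by blast
    then have "finite x0" "x0 \<noteq> {}" using fin by auto
    then have "M \<in> x0" using x0 Max_in by metis
    then show "{x0} \<subseteq> set (filter (\<lambda>x. M \<in> x) xs)" using x0 by auto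
  qed
  moreover have "distinct (filter (\<lambda>x. M \<in> x) xs)" using h by simp
  ultimately have "length (filter (\<lambda>x. M \<in> x) xs) = 1" using distinct_card by fastforce
  then have "M \<in> sdiff_list xs" by (simp add: mem_sdiff_list)
  then show "sdiff_list xs \<noteq> {}" by auto
qed

lemma pow_unique: "(2::nat)^j \<le> n \<Longrightarrow> n < 2^(Suc j) \<Longrightarrow> 2^j' \<le> n \<Longrightarrow> n < 2^(Suc j') \<Longrightarrow> j = j'"
proof (rule ccontr)
  assume h: "(2::nat)^j \<le> n" "n < 2^(Suc j)" "2^j' \<le> n" "n < 2^(Suc j')" "j \<noteq> j'"
  show False
  proof (cases "j < j'")
    case True
    then have "(2::nat)^(Suc j) \<le> 2^j'" by (intro power_increasing) auto
    then show False using h by simp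
  next
    case False
    then have "(2::nat)^(Suc j') \<le> 2^j" using h by (intro power_increasing) auto
    then show False using h by simp
  qed
qed

lemma Bs_props: "\<forall>x\<in>Bs k. finite x \<and> x \<noteq> {} \<and> (\<forall>m\<in>x. m < 2^k)"
proof
  fix x assume "x \<in> Bs k"
  then obtain i j where x: "x = {i, 2^j+i}" "1 \<le> j" "j < k" "1 \<le> i" "i < 2^j"
    by (auto simp: Bs_def)
  have "2^j + i < 2^(Suc j)" using x by simp
  also have "\<dots> \<le> 2^k" using x by (intro power_increasing) auto
  finally show "finite x \<and> x \<noteq> {} \<and> (\<forall>m\<in>x. m < 2^k)" using x by auto
qed

lemma Bs_inj: "inj_on Max (Bs k)"
proof (rule inj_onI)
  fix x y assume "x \<in> Bs k" "y \<in> Bs k" and e: "Max x = Max y"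
  then obtain i j i' j' where x: "x = {i, 2^j+i}" "1 \<le> i" "i < 2^j"
    and y: "y = {i', 2^j'+i'}" "1 \<le> i'" "i' < 2^j'"
    by (auto simp: Bs_def)
  have "Max x = 2^j+i" "Max y = 2^j'+i'" using x y by auto
  then have eq: "2^j+i = 2^j'+i'" using e by simp
  have "j = j'" by (rule pow_unique[of j "2^j+i" j']) (use x y eq in auto)
  then show "x = y" using x y eq by simp
qed

lemma Bs_fin: "finite (Bs k)"
proof (rule finite_subset)
  show "Bs k \<subseteq> Pow {..<2^k}" using Bs_props[of k] by auto
qed auto

lemma Bs_card: "card (Bs (Suc n)) = 2^(Suc n) - Suc n - 1"
proof (induction n)
  case 0 then show ?case by (simp add: Bs_01)
next
  case (Suc n)
  let ?N = "(\<lambda>i::nat. {i, 2^(Suc n)+i}) ` {1..<2^(Suc n)}"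
  have inj: "inj_on (\<lambda>i::nat. {i, 2^(Suc n)+i}) {1..<2^(Suc n)}"
    by (rule inj_onI) (auto simp: doubleton_eq_iff)
  have cN: "card ?N = 2^(Suc n) - 1" using card_image[OF inj] by simp
  have disj: "Bs (Suc n) \<inter> ?N = {}"
  proof (rule ccontr)
    assume "Bs (Suc n) \<inter> ?N \<noteq> {}"
    then obtain i where i: "{i, 2^(Suc n)+i} \<in> Bs (Suc n)" "i \<in> {1..<2^(Suc n)}" by blast
    have "2^(Suc n)+i < 2^(Suc n)" using bspec[OF Bs_props[of "Suc n"] i(1)] by simp
    then show False by simp
  qed
  have BS: "Bs (Suc (Suc n)) = Bs (Suc n) \<union> ?N" by (rule Bs_Suc) simp
  have "card (Bs (Suc (Suc n))) = card (Bs (Suc n)) + card ?N"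
    unfolding BS
    by (rule card_Un_disjoint[OF Bs_fin _ disj]) simp
  also have "\<dots> = 2^(Suc (Suc n)) - Suc (Suc n) - 1"
    using Suc.IH cN less_exp[of "Suc n"] by (simp only: power_Suc)
  finally show ?case .
qed


lemma Max_f: "Max {2*i-1, 2*i+1::nat} = 2*i+1" by (simp add: max_def)

lemma Max_smul: assumes "finite c" "c \<noteq> {}" shows "Max (smul 2 c) = 2 * Max c"
  unfolding smul_def using mono_Max_commute[of "\<lambda>i::nat. 2*i" c] assms by (simp add: mono_def)

lemma C_props: "(\<forall>x\<in>C (Suc n). finite x \<and> x \<noteq> {}) \<and> inj_on Max (C (Suc n))
   \<and> finite (C (Suc n)) \<and> card (C (Suc n)) = 2^(Suc n) - Suc n - 1"
proof (induction n)
  case 0 then show ?case by simp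
next
  case (Suc n)
  let ?f = "\<lambda>i::nat. {2*i-1, 2*i+1}"
  let ?I = "{1..2^(Suc n)-1::nat}"
  let ?O = "O_fam (Suc (Suc n))"
  let ?S = "smul_fam 2 (C (Suc n))"
  have O: "?O = ?f ` ?I" by (auto simp: O_fam_def)
  have CC: "C (Suc (Suc n)) = ?O \<union> ?S" by simp
  have Of: "\<forall>x\<in>?O. finite x \<and> x \<noteq> {} \<and> odd (Max x)"
  proof
    fix x assume "x \<in> ?O"
    then obtain i where "x = ?f i" "1 \<le> i" using O by auto
    then show "finite x \<and> x \<noteq> {} \<and> odd (Max x)" by (simp add: Max_f)
  qed
  have Sf: "\<forall>x\<in>?S. finite x \<and> x \<noteq> {} \<and> even (Max x)"
  proof
    fix x assume "x \<in> ?S"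
    then obtain c where c: "x = smul 2 c" "c \<in> C (Suc n)" by (auto simp: smul_fam_def)
    then have "finite c" "c \<noteq> {}" using Suc.IH by auto
    then show "finite x \<and> x \<noteq> {} \<and> even (Max x)" using c Max_smul by (auto simp: smul_def)
  qed
  have injf: "inj_on ?f ?I" by (rule inj_onI) (auto simp: doubleton_eq_iff)
  have cO: "card ?O = 2^(Suc n) - 1" using card_image[OF injf] O by simp
  have injs: "inj (smul 2)" unfolding smul_def inj_def using inj_mul2 by (simp add: inj_image_eq_iff)
  have cS: "card ?S = card (C (Suc n))" unfolding smul_fam_def
    using injs by (simp add: card_image inj_on_subset)
  have disj: "?O \<inter> ?S = {}" using Of Sf by blast
  have finO: "finite ?O" using O by simp
  have finS: "finite ?S" using Suc.IH by (simp add: smul_fam_def)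
  have injO: "inj_on Max ?O"
  proof (rule inj_onI)
    fix x y assume "x \<in> ?O" "y \<in> ?O" "Max x = Max y"
    then obtain i j where "x = ?f i" "y = ?f j" "Max x = Max y" using O by auto
    then show "x = y" by (simp add: Max_f)
  qed
  have injS: "inj_on Max ?S"
  proof (rule inj_onI)
    fix x y assume "x \<in> ?S" "y \<in> ?S" and e: "Max x = Max y"
    then obtain c d where c: "x = smul 2 c" "c \<in> C (Suc n)" "y = smul 2 d" "d \<in> C (Suc n)"
      by (auto simp: smul_fam_def)
    then have "Max x = 2 * Max c" "Max y = 2 * Max d" using Max_smul Suc.IH by auto
    then have "Max c = Max d" using e by simp
    then have "c = d" using Suc.IH c by (auto dest: inj_onD)
    then show "x = y" using c by simp
  qed
  have inj: "inj_on Max (?O \<union> ?S)"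
  proof (rule inj_onI)
    fix x y assume h: "x \<in> ?O \<union> ?S" "y \<in> ?O \<union> ?S" "Max x = Max y"
    show "x = y"
    proof (cases "x \<in> ?O")
      case True
      then have "y \<in> ?O" using h Of Sf by fastforce
      then show ?thesis using True h injO by (auto dest: inj_onD)
    next
      case False
      then have "x \<in> ?S" "y \<in> ?S" using h Of Sf by fastforce+
      then show ?thesis using h injS by (auto dest: inj_onD)
    qed
  qed
  have "card (C (Suc (Suc n))) = card ?O + card ?S" using CC disj finO finS by (simp add: card_Un_disjoint)
  also have "\<dots> = 2^(Suc (Suc n)) - Suc (Suc n) - 1"
    using Suc.IH cO cS less_exp[of "Suc n"] by simp
  finally show ?case using CC inj Of Sf finO finS by auto
qed

theorem mainTheorem4:
  fixes k :: nat
  assumes "k \<ge> 1"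
  shows "span2 (B k) = span2 (C k)
       \<and> card (B k) = 2^k - k - 1 \<and> card (C k) = 2^k - k - 1
       \<and> lin_indep2 (B k) \<and> lin_indep2 (C k)"
proof -
  obtain n where k: "k = Suc n" using assms by (cases k) auto
  have "lin_indep2 (B k)" unfolding B_Bs using Bs_props Bs_inj by (intro indep_crit) auto
  moreover have "lin_indep2 (C k)" unfolding k using C_props by (intro indep_crit) auto
  ultimately show ?thesis using span_eq Bs_card C_props B_Bs k by simp
qed

end
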